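(* Let $p>3$ be a prime. Then $$\sum_{k=1}^{(p-3)/2}\frac{(-1)^k\binom{(p-1)/2}{k}\,(2H_{2k}-H_k)}{2k+1}\equiv -2(-1)^{(p-1)/2}q_p(2)^2\pmod p.$$
   Context: $H_n=\sum_{0<j\le n}1/j$ is the $n$-th harmonic number ($H_0=0$), and $q_p(2)=(2^{p-1}-1)/p$ is the Fermat quotient. Congruences between rationals modulo $p$ mean the difference is $p$ times a rational with denominator prime to $p$. *)

theory Defs
  imports Complex_Main "HOL-Number_Theory.Number_Theory"
begin

definition harm :: "nat \<Rightarrow> rat" where
  "harm n = (\<Sum>j\<in>{1..n}. 1 / of_nat j)"

definition fermat_quotient2 :: "nat \<Rightarrow> rat" where
  "fermat_quotient2 p = (2 ^ (p - 1) - 1) / of_nat p"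

definition rat_cong :: "rat \<Rightarrow> rat \<Rightarrow> nat \<Rightarrow> bool" where
  "rat_cong x y p \<longleftrightarrow>
     (\<exists>a b :: int. b \<noteq> 0 \<and> \<not> int p dvd b \<and> x - y = of_nat p * (of_int a / of_int b))"

end

theory Submission
  imports Defs
begin


lemma alt_binom_shift:
  fixes f :: "nat \<Rightarrow> 'a::comm_ring_1"
  shows "(\<Sum>k\<le>Suc m. (-1)^k * of_nat (Suc m choose k) * f k)
       = (\<Sum>k\<le>m. (-1)^k * of_nat (m choose k) * (f k - f (Suc k)))"
proof -
  have A: "(\<Sum>k\<le>Suc m. (-1)^k * of_nat (Suc m choose k) * f k)
     = f 0 + (\<Sum>k\<le>m. (-1)^Suc k * of_nat (m choose k) * f (Suc k))
           + (\<Sum>k\<le>m. (-1)^Suc k * of_nat (m choose Suc k) * f (Suc k))"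
  proof -
    have "(\<Sum>k\<le>Suc m. (-1)^k * of_nat (Suc m choose k) * f k)
       = f 0 + (\<Sum>k\<le>m. (-1)^Suc k * of_nat (Suc m choose Suc k) * f (Suc k))"
      by (simp add: sum.atMost_Suc_shift del: sum.atMost_Suc)
    also have "\<dots> = f 0 + (\<Sum>k\<le>m. (-1)^Suc k * of_nat (m choose k) * f (Suc k)
           + (-1)^Suc k * of_nat (m choose Suc k) * f (Suc k))"
      by (simp only: binomial_Suc_Suc of_nat_add distrib_left distrib_right)
    also have "\<dots> = f 0 + (\<Sum>k\<le>m. (-1)^Suc k * of_nat (m choose k) * f (Suc k))
           + (\<Sum>k\<le>m. (-1)^Suc k * of_nat (m choose Suc k) * f (Suc k))"
      by (simp only: sum.distrib add.assoc)
    finally show ?thesis .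
  qed
  have B: "(\<Sum>k\<le>Suc m. (-1)^k * of_nat (m choose k) * f k)
      = f 0 + (\<Sum>k\<le>m. (-1)^Suc k * of_nat (m choose Suc k) * f (Suc k))"
    by (simp add: sum.atMost_Suc_shift del: sum.atMost_Suc)
  have C: "(\<Sum>k\<le>Suc m. (-1)^k * of_nat (m choose k) * f k)
      = (\<Sum>k\<le>m. (-1)^k * of_nat (m choose k) * f k)"
    by (simp add: binomial_eq_0)
  have D: "(\<Sum>k\<le>m. (-1)^k * of_nat (m choose k) * (f k - f (Suc k)))
     = (\<Sum>k\<le>m. (-1)^k * of_nat (m choose k) * f k) + (\<Sum>k\<le>m. (-1)^Suc k * of_nat (m choose k) * f (Suc k))"
    by (simp add: sum.distrib[symmetric] algebra_simps)
  show ?thesis using A B C D by (simp add: algebra_simps)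
qed

fun dP :: "'a::comm_ring_1 \<Rightarrow> nat \<Rightarrow> 'a" where
  "dP a 0 = 0"
| "dP a (Suc k) = dP a k * (a + of_nat k) + pochhammer a k"

lemma dP_rec: "dP a (Suc k) = pochhammer (a+1) k + a * dP (a+1) k"
proof (induction k)
  case 0 then show ?case by simp
next
  case (Suc k)
  have "dP a (Suc (Suc k)) = dP a (Suc k) * (a + of_nat (Suc k)) + pochhammer a (Suc k)" by simp
  also have "\<dots> = (pochhammer (a+1) k + a * dP (a+1) k) * (a + 1 + of_nat k) + a * pochhammer (a+1) k"
    using Suc.IH by (subst pochhammer_rec) (simp add: algebra_simps)
  also have "\<dots> = pochhammer (a+1) (Suc k) + a * dP (a+1) (Suc k)"
    by (simp add: pochhammer_Suc algebra_simps)
  finally show ?case .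
qed

lemma hyp1:
  fixes a b :: rat
  assumes "b > 0"
  shows "(\<Sum>k\<le>m. (-1)^k * of_nat (m choose k) * (pochhammer a k / pochhammer b k))
         = pochhammer (b - a) m / pochhammer b m"
  using assms
proof (induction m arbitrary: b)
  case 0 then show ?case by simp
next
  case (Suc m)
  have pb: "\<And>k. pochhammer b k > 0" using Suc.prems by (simp add: pochhammer_pos)
  have pb1: "\<And>k. pochhammer (b+1) k > 0" using Suc.prems by (simp add: pochhammer_pos)
  have d: "pochhammer a k / pochhammer b k - pochhammer a (Suc k) / pochhammer b (Suc k)
        = (b - a) / b * (pochhammer a k / pochhammer (b+1) k)" for k
  proof -
    have e1: "pochhammer b (Suc k) = b * pochhammer (b+1) k" by (simp add: pochhammer_rec)
    have e2: "pochhammer b (Suc k) = pochhammer b k * (b + of_nat k)" by (simp add: pochhammer_Suc)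
    have bk: "b + of_nat k > 0" using Suc.prems by (simp add: add_pos_nonneg)
    define X where "X = pochhammer a k"
    define Y where "Y = pochhammer b k"
    define Z where "Z = pochhammer (b+1) k"
    have e3: "Y * (b + of_nat k) = b * Z" using e1 e2 unfolding Y_def Z_def by simp
    have Y0: "Y \<noteq> 0" "Z \<noteq> 0" using pb[of k] pb1[of k] unfolding Y_def Z_def by auto
    have f1: "X / Y = X * (b + of_nat k) / (b * Z)"
    proof -
      have "X / Y = X * (b + of_nat k) / (Y * (b + of_nat k))" using bk by simp
      also have "\<dots> = X * (b + of_nat k) / (b * Z)" using e3 by simp
      finally show ?thesis .
    qed
    have f2: "pochhammer a (Suc k) / pochhammer b (Suc k) = X * (a + of_nat k) / (b * Z)"
      using e1 unfolding X_def Z_def by (simp add: pochhammer_Suc)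
    have "X / Y - X * (a + of_nat k) / (b * Z) = (b - a) / b * (X / Z)"
      unfolding f1 using Y0 Suc.prems by (simp add: field_simps)
    then show ?thesis using f2 unfolding X_def Y_def Z_def by simp
  qed
  have "(\<Sum>k\<le>Suc m. (-1)^k * of_nat (Suc m choose k) * (pochhammer a k / pochhammer b k))
     = (\<Sum>k\<le>m. (-1)^k * of_nat (m choose k) * ((b - a) / b * (pochhammer a k / pochhammer (b+1) k)))"
    by (subst alt_binom_shift) (simp add: d)
  also have "\<dots> = (b - a) / b * (\<Sum>k\<le>m. (-1)^k * of_nat (m choose k) * (pochhammer a k / pochhammer (b+1) k))"
    by (simp add: sum_distrib_left algebra_simps)
  also have "\<dots> = (b - a) / b * (pochhammer (b + 1 - a) m / pochhammer (b+1) m)"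
    using Suc.IH[of "b+1"] Suc.prems by simp
  also have "\<dots> = pochhammer (b - a) (Suc m) / pochhammer b (Suc m)"
    using Suc.prems by (simp add: pochhammer_rec algebra_simps)
  finally show ?case .
qed

lemma hyp2:
  fixes a b :: rat
  assumes "b > 0"
  shows "(\<Sum>k\<le>m. (-1)^k * of_nat (m choose k) * (dP a k / pochhammer b k))
         = - dP (b - a) m / pochhammer b m"
  using assms
proof (induction m arbitrary: b)
  case 0 then show ?case by simp
next
  case (Suc m)
  have pb: "\<And>k. pochhammer b k > 0" using Suc.prems by (simp add: pochhammer_pos)
  have pb1: "\<And>k. pochhammer (b+1) k > 0" using Suc.prems by (simp add: pochhammer_pos)
  have d: "dP a k / pochhammer b k - dP a (Suc k) / pochhammer b (Suc k)
        = (b - a) / b * (dP a k / pochhammer (b+1) k) - 1 / b * (pochhammer a k / pochhammer (b+1) k)" for k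
  proof -
    have e1: "pochhammer b (Suc k) = b * pochhammer (b+1) k" by (simp add: pochhammer_rec)
    have e2: "pochhammer b (Suc k) = pochhammer b k * (b + of_nat k)" by (simp add: pochhammer_Suc)
    have bk: "b + of_nat k > 0" using Suc.prems by (simp add: add_pos_nonneg)
    define X where "X = dP a k"
    define W where "W = pochhammer a k"
    define Y where "Y = pochhammer b k"
    define Z where "Z = pochhammer (b+1) k"
    have e3: "Y * (b + of_nat k) = b * Z" using e1 e2 unfolding Y_def Z_def by simp
    have Y0: "Y \<noteq> 0" "Z \<noteq> 0" using pb[of k] pb1[of k] unfolding Y_def Z_def by auto
    have f1: "X / Y = X * (b + of_nat k) / (b * Z)"
    proof -
      have "X / Y = X * (b + of_nat k) / (Y * (b + of_nat k))" using bk by simp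
      also have "\<dots> = X * (b + of_nat k) / (b * Z)" using e3 by simp
      finally show ?thesis .
    qed
    have f2: "dP a (Suc k) / pochhammer b (Suc k) = (X * (a + of_nat k) + W) / (b * Z)"
      using e1 unfolding X_def Z_def W_def by simp
    have "X / Y - dP a (Suc k) / pochhammer b (Suc k) = (b - a) / b * (X / Z) - 1 / b * (W / Z)"
      unfolding f1 f2 using Y0 Suc.prems by (simp add: field_simps)
    then show ?thesis unfolding X_def Y_def Z_def W_def .
  qed
  have "(\<Sum>k\<le>Suc m. (-1)^k * of_nat (Suc m choose k) * (dP a k / pochhammer b k))
     = (\<Sum>k\<le>m. (-1)^k * of_nat (m choose k) * ((b - a) / b * (dP a k / pochhammer (b+1) k)
           - 1 / b * (pochhammer a k / pochhammer (b+1) k)))"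
    by (subst alt_binom_shift) (simp only: d)
  also have "\<dots> = (b - a) / b * (\<Sum>k\<le>m. (-1)^k * of_nat (m choose k) * (dP a k / pochhammer (b+1) k))
       - 1 / b * (\<Sum>k\<le>m. (-1)^k * of_nat (m choose k) * (pochhammer a k / pochhammer (b+1) k))"
    by (simp add: sum_distrib_left sum_subtractf algebra_simps)
  also have "\<dots> = (b - a) / b * (- dP (b + 1 - a) m / pochhammer (b+1) m)
       - 1 / b * (pochhammer (b + 1 - a) m / pochhammer (b+1) m)"
    using Suc.IH[of "b+1"] hyp1[where b="b+1" and a=a and m=m] Suc.prems by simp
  also have "\<dots> = - dP (b - a) (Suc m) / pochhammer b (Suc m)"
  proof -
    have r1: "dP (b-a) (Suc m) = pochhammer (b+1-a) m + (b-a) * dP (b+1-a) m"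
      by (subst dP_rec) (simp add: algebra_simps)
    have r2: "pochhammer b (Suc m) = b * pochhammer (b+1) m" by (simp add: pochhammer_rec)
    show ?thesis unfolding r1 r2 using Suc.prems pb1[of m] by (simp add: field_simps)
  qed
  finally show ?case .
qed

lemma harm_Suc: "harm (Suc n) = harm n + 1 / of_nat (Suc n)"
  unfolding harm_def by simp

lemma harm_0: "harm 0 = 0" unfolding harm_def by simp

lemma poch_half_ratio: "pochhammer (1/2::rat) k / pochhammer (3/2) k = 1 / of_nat (2*k+1)"
proof -
  have e: "pochhammer (1/2::rat) k * (1/2 + of_nat k) = 1/2 * pochhammer (3/2) k"
    using pochhammer_rec[of "1/2::rat" k] pochhammer_Suc[of "1/2::rat" k] by simp
  have p: "pochhammer (3/2::rat) k > 0" by (simp add: pochhammer_pos)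
  have q: "(1/2 + of_nat k :: rat) > 0" by (simp add: add_pos_nonneg)
  from e p q show ?thesis by (simp add: field_simps)
qed

lemma dP_half: "dP (1/2::rat) k = pochhammer (1/2) k * (2 * harm (2*k) - harm k)"
proof (induction k)
  case 0 then show ?case by (simp add: harm_0)
next
  case (Suc k)
  have h: "harm (2 * Suc k) = harm (2*k) + 1 / of_nat (2*k+1) + 1 / of_nat (2*k+2)"
    by (simp add: harm_Suc)
  have q: "(1 + 2 * of_nat k :: rat) > 0" by (simp add: add_pos_nonneg)
  define E where "E = 2 * harm (2*k) - harm k"
  have a1: "dP (1/2::rat) (Suc k) = pochhammer (1/2) k * (E * (1/2 + of_nat k) + 1)"
    unfolding dP.simps Suc.IH E_def by (simp add: algebra_simps)
  have a2: "pochhammer (1/2::rat) (Suc k) = pochhammer (1/2) k * (1/2 + of_nat k)"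
    by (simp add: pochhammer_Suc)
  have a3: "2 * harm (2 * Suc k) - harm (Suc k) = E + 2 / of_nat (2*k+1)"
  proof -
    have b: "2 * (1 / of_nat (2*k+2)) = (1::rat) / of_nat (Suc k)"
      by (simp add: field_simps)
    have b2: "2 * (1 / of_nat (2*k+1)) = (2::rat) / of_nat (2*k+1)" by simp
    show ?thesis unfolding E_def h harm_Suc distrib_left b b2 by simp
  qed
  have a4: "(1/2 + of_nat k) * (2 / of_nat (2*k+1)) = (1::rat)"
    using q by (simp add: field_simps)
  have q2: "(1 + of_nat k * 2 :: rat) \<noteq> 0" using q by simp
  show ?case unfolding a1 a2 a3 using q2 by (simp add: field_simps)
qed

lemma dP_one: "dP (1::rat) m = fact m * harm m"
proof (induction m)
  case 0 then show ?case by (simp add: harm_0)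
next
  case (Suc m)
  then show ?case by (simp add: harm_Suc pochhammer_fact[symmetric] field_simps)
qed

lemma full_identity:
  "(\<Sum>k\<le>m. (-1)^k * of_nat (m choose k) * (2 * harm (2 * k) - harm k) / of_nat (2 * k + 1))
    = - fact m * harm m / pochhammer (3/2::rat) m"
proof -
  have t: "dP (1/2::rat) k / pochhammer (3/2) k = (2 * harm (2 * k) - harm k) / of_nat (2 * k + 1)" for k
  proof -
    have "dP (1/2::rat) k / pochhammer (3/2) k = (pochhammer (1/2) k / pochhammer (3/2) k) * (2 * harm (2 * k) - harm k)"
      by (simp add: dP_half)
    then show ?thesis by (simp add: poch_half_ratio)
  qed
  have "(\<Sum>k\<le>m. (-1)^k * of_nat (m choose k) * (2 * harm (2 * k) - harm k) / of_nat (2 * k + 1))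
      = (\<Sum>k\<le>m. (-1)^k * of_nat (m choose k) * (dP (1/2::rat) k / pochhammer (3/2) k))"
    by (simp add: t)
  also have "\<dots> = - dP (3/2 - 1/2) m / pochhammer (3/2::rat) m" by (rule hyp2) simp
  also have "\<dots> = - fact m * harm m / pochhammer (3/2::rat) m" by (simp add: dP_one)
  finally show ?thesis .
qed



definition pint :: "nat \<Rightarrow> rat \<Rightarrow> bool" where
  "pint p x \<longleftrightarrow> (\<exists>a b :: int. b \<noteq> 0 \<and> \<not> int p dvd b \<and> x = of_int a / of_int b)"

lemma pint_frac:
  assumes "\<not> int p dvd b" shows "pint p (of_int a / of_int b)"
  using assms unfolding pint_def by (metis dvd_0_right)

lemma pint_of_int: assumes "prime p" shows "pint p (of_int a)"
proof -
  have "\<not> int p dvd 1" using assms by (metis not_prime_unit prime_nat_int_transfer)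
  then show ?thesis using pint_frac[of p 1 a] by simp
qed

lemma pint_of_nat: assumes "prime p" shows "pint p (of_nat a)"
  using pint_of_int[OF assms, of "int a"] by simp

lemma pint_0: assumes "prime p" shows "pint p 0"
  using pint_of_int[OF assms, of 0] by simp
lemma pint_1: assumes "prime p" shows "pint p 1"
  using pint_of_int[OF assms, of 1] by simp
lemma pint_numeral: assumes "prime p" shows "pint p (numeral n)"
  using pint_of_nat[OF assms, of "numeral n"] by simp

lemma pint_ndvd_mult:
  assumes "prime p" "\<not> int p dvd b" "\<not> int p dvd d" shows "\<not> int p dvd (b * d)"
  using assms by (simp add: prime_dvd_mult_iff prime_nat_int_transfer)

lemma pint_add: assumes "prime p" "pint p x" "pint p y" shows "pint p (x + y)"
proof -
  obtain a b where ab: "b \<noteq> 0" "\<not> int p dvd b" "x = of_int a / of_int b" using assms(2) unfolding pint_def by blast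
  obtain c d where cd: "d \<noteq> 0" "\<not> int p dvd d" "y = of_int c / of_int d" using assms(3) unfolding pint_def by blast
  have e: "x + y = of_int (a * d + c * b) / of_int (b * d)" using ab cd by (simp add: field_simps)
  show ?thesis unfolding e by (rule pint_frac[OF pint_ndvd_mult[OF assms(1) ab(2) cd(2)]])
qed

lemma pint_mult: assumes "prime p" "pint p x" "pint p y" shows "pint p (x * y)"
proof -
  obtain a b where ab: "b \<noteq> 0" "\<not> int p dvd b" "x = of_int a / of_int b" using assms(2) unfolding pint_def by blast
  obtain c d where cd: "d \<noteq> 0" "\<not> int p dvd d" "y = of_int c / of_int d" using assms(3) unfolding pint_def by blast
  have e: "x * y = of_int (a * c) / of_int (b * d)" using ab cd by (simp add: field_simps)
  show ?thesis unfolding e by (rule pint_frac[OF pint_ndvd_mult[OF assms(1) ab(2) cd(2)]])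
qed

lemma pint_uminus: assumes "prime p" "pint p x" shows "pint p (- x)"
  using pint_mult[OF assms(1) pint_of_int[OF assms(1), of "-1"] assms(2)] by simp

lemma pint_diff: assumes "prime p" "pint p x" "pint p y" shows "pint p (x - y)"
  using pint_add[OF assms(1) assms(2) pint_uminus[OF assms(1) assms(3)]] by simp

lemma pint_power: assumes "prime p" "pint p x" shows "pint p (x ^ n)"
  by (induction n) (simp_all add: pint_1[OF assms(1)] pint_mult[OF assms(1) assms(2)])

lemma pint_sum: assumes "prime p" "\<And>i. i \<in> A \<Longrightarrow> pint p (f i)" shows "pint p (sum f A)"
  using assms(2)
proof (induction A rule: infinite_finite_induct)
  case (infinite A) then show ?case by (simp add: pint_0[OF assms(1)])
next
  case empty then show ?case by (simp add: pint_0[OF assms(1)])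
next
  case (insert x F) then show ?case by (simp add: pint_add[OF assms(1)])
qed

lemma pint_prod: assumes "prime p" "\<And>i. i \<in> A \<Longrightarrow> pint p (f i)" shows "pint p (prod f A)"
  using assms(2)
proof (induction A rule: infinite_finite_induct)
  case (infinite A) then show ?case by (simp add: pint_1[OF assms(1)])
next
  case empty then show ?case by (simp add: pint_1[OF assms(1)])
next
  case (insert x F) then show ?case by (simp add: pint_mult[OF assms(1)])
qed

lemma pint_inv_nat: assumes "\<not> p dvd n" shows "pint p (1 / of_nat n)"
proof -
  have "\<not> int p dvd int n" using assms by simp
  then show ?thesis using pint_frac[of p "int n" 1] by simp
qed

lemma pint_inv_unit:
  assumes "prime p" "pint p X"
  shows "pint p (1 / (1 - of_nat p * X))" and "1 - of_nat p * X \<noteq> 0"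
proof -
  obtain a b where ab: "b \<noteq> 0" "\<not> int p dvd b" "X = of_int a / of_int b" using assms(2) unfolding pint_def by blast
  have nd: "\<not> int p dvd (b - int p * a)"
    using ab(2) by (metis dvd_diff_commute dvd_triv_left dvd_add_right_iff diff_add_cancel)
  then have nz: "b - int p * a \<noteq> 0" by auto
  have e: "1 - of_nat p * X = of_int (b - int p * a) / of_int b" using ab by (simp add: field_simps)
  show "1 - of_nat p * X \<noteq> 0" unfolding e using nz ab(1)
    by (simp only: divide_eq_0_iff of_int_eq_0_iff de_Morgan_disj) simp
  have e2: "1 / (1 - of_nat p * X) = of_int b / of_int (b - int p * a)" unfolding e by simp
  show "pint p (1 / (1 - of_nat p * X))" unfolding e2 by (rule pint_frac[OF nd])
qed

lemma prod_expand:
  assumes "prime p" "\<And>i. i \<in> A \<Longrightarrow> pint p (x i)" "finite A"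
  shows "\<exists>\<alpha>. pint p \<alpha> \<and> (\<Prod>i\<in>A. 1 - of_nat p * x i) = 1 - of_nat p * (\<Sum>i\<in>A. x i) + of_nat p ^ 2 * \<alpha>"
  using assms(3,2)
proof (induction A rule: finite_induct)
  case empty then show ?case using pint_0[OF assms(1)] by auto
next
  case (insert y F)
  then obtain \<alpha> where a: "pint p \<alpha>" "(\<Prod>i\<in>F. 1 - of_nat p * x i) = 1 - of_nat p * (\<Sum>i\<in>F. x i) + of_nat p ^ 2 * \<alpha>"
    by auto
  define \<alpha>' where "\<alpha>' = \<alpha> * (1 - of_nat p * x y) + (\<Sum>i\<in>F. x i) * x y"
  have "pint p \<alpha>'" unfolding \<alpha>'_def using a(1) insert.prems
    by (intro pint_add[OF assms(1)] pint_mult[OF assms(1)] pint_diff[OF assms(1)] pint_sum[OF assms(1)] pint_1[OF assms(1)] pint_of_nat[OF assms(1)]) auto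
  moreover have "(\<Prod>i\<in>insert y F. 1 - of_nat p * x i) = 1 - of_nat p * (\<Sum>i\<in>insert y F. x i) + of_nat p ^ 2 * \<alpha>'"
  proof -
    have "(\<Prod>i\<in>insert y F. 1 - of_nat p * x i) = (1 - of_nat p * x y) * (\<Prod>i\<in>F. 1 - of_nat p * x i)"
      using insert.hyps by simp
    also have "\<dots> = (1 - of_nat p * x y) * (1 - of_nat p * (\<Sum>i\<in>F. x i) + of_nat p ^ 2 * \<alpha>)"
      by (simp only: a(2))
    also have "\<dots> = 1 - of_nat p * (x y + (\<Sum>i\<in>F. x i)) + of_nat p ^ 2 * \<alpha>'"
      unfolding \<alpha>'_def by (simp add: algebra_simps power2_eq_square)
    finally show ?thesis using insert.hyps by simp
  qed
  ultimately show ?case by blast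
qed



lemma sum_inv_sq:
  assumes p: "prime p" and p3: "p > 3"
  shows "\<exists>t. pint p t \<and> (\<Sum>i\<in>{1..p-1}. 1 / of_nat i ^ 2) = of_nat p * t"
proof -
  define A where "A = {1..p-1}"
  define g where "g i = (2 * i) mod p" for i :: nat
  define h where "h i = 1 / (of_nat i :: rat) ^ 2" for i :: nat
  have p0: "p > 0" using p3 by simp
  have nd2: "\<not> p dvd 2" using p3 by (auto dest: dvd_imp_le)
  have ndA: "\<not> p dvd i" if "i \<in> A" for i using that unfolding A_def
    by (auto dest: dvd_imp_le)
  have ndg: "\<not> p dvd (2 * i)" if "i \<in> A" for i
    using ndA[OF that] nd2 p by (simp add: prime_dvd_mult_iff)
  have gA: "g ` A \<subseteq> A"
  proof
    fix y assume "y \<in> g ` A"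
    then obtain i where i: "i \<in> A" "y = g i" by auto
    have "y \<noteq> 0" using ndg[OF i(1)] i(2) unfolding g_def by (simp add: dvd_eq_mod_eq_0)
    moreover have "y < p" using i(2) p0 unfolding g_def by simp
    ultimately show "y \<in> A" unfolding A_def by auto
  qed
  have inj: "inj_on g A"
  proof
    fix i j assume ij: "i \<in> A" "j \<in> A" "g i = g j"
    have "[2 * i = 2 * j] (mod p)" using ij(3) unfolding g_def cong_def by simp
    moreover have "coprime 2 p" using nd2 p by (metis prime_imp_coprime coprime_commute)
    ultimately have "[i = j] (mod p)" by (simp add: cong_mult_lcancel_nat)
    moreover have "i < p" "j < p" using ij unfolding A_def by auto
    ultimately show "i = j" unfolding cong_def by simp
  qed
  have gAA: "g ` A = A" using endo_inj_surj[OF _ gA inj] unfolding A_def by simp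
  have T: "sum h A = (\<Sum>i\<in>A. h (g i))"
  proof -
    have "sum h A = sum h (g ` A)" using gAA by simp
    also have "\<dots> = (\<Sum>i\<in>A. h (g i))" using sum.reindex[OF inj] by simp
    finally show ?thesis .
  qed
  define d where "d i = (of_nat ((2*i) div p) :: rat) * (2 * of_nat i + of_nat (g i)) * (1 / of_nat i) ^ 2 * (1 / of_nat (g i)) ^ 2 * (1 / 2) ^ 2" for i
  have dpint: "pint p (d i)" if "i \<in> A" for i
  proof -
    have "g i \<in> A" using gA that by auto
    then have a1: "pint p (1 / of_nat (g i))" "pint p (1 / of_nat i)" "pint p (1/2)"
      using that ndA nd2 pint_inv_nat[of p 2] by (auto intro: pint_inv_nat)
    have a2: "pint p (2 * of_nat i + of_nat (g i))"
      using pint_of_nat[OF p, of "2*i + g i"] by simp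
    show ?thesis unfolding d_def
      by (intro pint_mult[OF p] pint_power[OF p] a1 a2 pint_of_nat[OF p])
  qed
  have deq: "h (g i) - h i / 4 = of_nat p * d i" if "i \<in> A" for i
  proof -
    define r where "r = g i"
    define k where "k = (2*i) div p"
    have "2 * i = p * k + r" unfolding k_def r_def g_def by simp
    then have pk: "of_nat p * of_nat k = 2 * of_nat i - (of_nat r :: rat)"
      by (metis add_diff_cancel_right' of_nat_add of_nat_mult of_nat_numeral)
    have i0: "(of_nat i :: rat) \<noteq> 0" using that unfolding A_def by auto
    have "r \<in> A" using gA that unfolding r_def by auto
    then have r0: "(of_nat r :: rat) \<noteq> 0" unfolding A_def by auto
    define X where "X = (2 * of_nat i + of_nat r) / (4 * of_nat i ^ 2 * of_nat r ^ 2 :: rat)"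
    have "of_nat p * d i = (of_nat p * of_nat k) * X"
      unfolding d_def X_def r_def k_def using i0 r0 by (simp add: field_simps)
    also have "\<dots> = (2 * of_nat i - of_nat r) * X" using pk by simp
    also have "\<dots> = h r - h i / 4" unfolding X_def h_def using i0 r0 by (simp add: field_simps power2_eq_square)
    finally show ?thesis unfolding r_def by simp
  qed
  have "sum h A - sum h A / 4 = (\<Sum>i\<in>A. h (g i) - h i / 4)"
  proof -
    have "(\<Sum>i\<in>A. h (g i) - h i / 4) = (\<Sum>i\<in>A. h (g i)) - (\<Sum>i\<in>A. h i) / 4"
      by (simp add: sum_subtractf sum_divide_distrib)
    then show ?thesis using T by simp
  qed
  also have "\<dots> = of_nat p * (\<Sum>i\<in>A. d i)" using deq by (simp add: sum_distrib_left)
  finally have e: "sum h A - sum h A / 4 = of_nat p * (\<Sum>i\<in>A. d i)" .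
  define t where "t = 4 * (1 / of_nat 3) * (\<Sum>i\<in>A. d i)"
  have nd3: "\<not> p dvd 3" using p3 by (auto dest: dvd_imp_le)
  have "pint p t" unfolding t_def using dpint pint_inv_nat[OF nd3]
    by (intro pint_mult[OF p] pint_sum[OF p] pint_numeral[OF p]) auto
  moreover have "sum h A = of_nat p * t" using e unfolding t_def by (simp add: field_simps)
  ultimately show ?thesis unfolding A_def h_def by blast
qed

lemma wolstenholme:
  assumes p: "prime p" and p3: "p > 3"
  shows "\<exists>w. pint p w \<and> harm (p - 1) = of_nat p ^ 2 * w"
proof -
  define A where "A = {1..p-1}"
  obtain t where t: "pint p t" "(\<Sum>i\<in>A. 1 / of_nat i ^ 2) = of_nat p * t"
    using sum_inv_sq[OF p p3] unfolding A_def by blast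
  have H: "harm (p - 1) = (\<Sum>i\<in>A. 1 / of_nat i)" unfolding harm_def A_def by simp
  have rev: "(\<Sum>i\<in>A. 1 / (of_nat i :: rat)) = (\<Sum>i\<in>A. 1 / of_nat (p - i))"
  proof -
    have "(\<Sum>i\<in>A. 1 / (of_nat i :: rat)) = (\<Sum>i\<in>A. 1 / of_nat (p - 1 + 1 - i))"
      unfolding A_def by (rule sum.atLeastAtMost_rev)
    also have "p - 1 + 1 = p" using p3 by simp
    finally show ?thesis .
  qed
  define e where "e i = (1 / of_nat i) ^ 2 * (1 / (of_nat (p - i) :: rat))" for i
  have ep: "pint p (e i)" if "i \<in> A" for i
  proof -
    have "\<not> p dvd i" "\<not> p dvd (p - i)" using that unfolding A_def
      by (auto dest: dvd_imp_le simp: dvd_diff_nat)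
    then show ?thesis unfolding e_def
      by (intro pint_mult[OF p] pint_power[OF p] pint_inv_nat)
  qed
  have pt: "1 / of_nat i + 1 / of_nat (p - i) = - of_nat p * (1 / of_nat i ^ 2) + of_nat p ^ 2 * e i"
    if "i \<in> A" for i
  proof -
    have i0: "(of_nat i :: rat) \<noteq> 0" using that unfolding A_def by auto
    have c: "(of_nat (p - i) :: rat) = of_nat p - of_nat i" using that unfolding A_def by auto
    have pi0: "(of_nat p - of_nat i :: rat) \<noteq> 0" using that unfolding A_def by auto
    show ?thesis unfolding e_def c using i0 pi0 by (simp add: field_simps power2_eq_square)
  qed
  have "2 * harm (p - 1) = (\<Sum>i\<in>A. 1 / of_nat i + 1 / of_nat (p - i))"
    unfolding H using rev by (simp add: sum.distrib)
  also have "\<dots> = (\<Sum>i\<in>A. - of_nat p * (1 / of_nat i ^ 2) + of_nat p ^ 2 * e i)"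
    using pt by simp
  also have "\<dots> = - of_nat p * (\<Sum>i\<in>A. 1 / of_nat i ^ 2) + of_nat p ^ 2 * (\<Sum>i\<in>A. e i)"
    by (simp only: sum.distrib sum_distrib_left)
  also have "\<dots> = of_nat p ^ 2 * ((\<Sum>i\<in>A. e i) - t)"
    using t(2) by (simp add: algebra_simps power2_eq_square)
  finally have e2: "2 * harm (p - 1) = of_nat p ^ 2 * ((\<Sum>i\<in>A. e i) - t)" .
  define w where "w = ((\<Sum>i\<in>A. e i) - t) * (1 / of_nat 2)"
  have nd2: "\<not> p dvd 2" using p3 by (auto dest: dvd_imp_le)
  have "pint p w" unfolding w_def using ep t(1) pint_inv_nat[OF nd2]
    by (intro pint_mult[OF p] pint_diff[OF p] pint_sum[OF p]) auto
  moreover have "harm (p - 1) = of_nat p ^ 2 * w" using e2 unfolding w_def by simp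
  ultimately show ?thesis by blast
qed


lemma alg:
  fixes P u \<alpha> \<beta> V w sg q s Q R H :: rat
  assumes P0: "P \<noteq> 0" and Q: "Q = 1 - P*(u/2 - P*\<alpha>)" and V: "V*Q = 1"
    and R: "R = 1 - P*u + P^2*\<beta>" and RQ: "R = (1 + P*q)*Q" and Hw: "H = P^2*w"
    and s: "s = -sg*u/(P*Q) - sg*(2*H - u)/P"
  shows "s - (-2*sg*q^2) = P * (sg*(-(-u*\<alpha> + u*(u/2-P*\<alpha>)^2*V + 2*w)
      - 2*u*((\<beta>-\<alpha>)*V - (u/2)*(u/2-P*\<alpha>)*V) + 2*P*((\<beta>-\<alpha>)*V - (u/2)*(u/2-P*\<alpha>)*V)^2))"
proof -
  define X where "X = u/2 - P*\<alpha>"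
  define F where "F = (\<beta>-\<alpha>)*V - (u/2)*X*V"
  have Q': "Q = 1 - P*X" unfolding X_def Q ..
  have Vx: "V = 1 + P*X*V"
  proof -
    have "V = V * (Q + P*X)" using Q' by simp
    also have "\<dots> = V*Q + P*X*V" by (simp add: algebra_simps)
    finally show ?thesis using V by simp
  qed
  have Q0: "Q \<noteq> 0" using V by auto
  have "P*(q*Q) = P*(X - u + P*\<beta>)" using R RQ unfolding Q' by (simp add: algebra_simps power2_eq_square)
  then have qQ: "q*Q = X - u + P*\<beta>" using P0 by simp
  have e1: "q = q*Q*V" using V by (simp add: algebra_simps)
  have e2: "X - u + P*\<beta> = -u/2 + P*(\<beta>-\<alpha>)" unfolding X_def by (simp add: algebra_simps)
  have e3: "u/2*V = u/2*(1 + P*X*V)" by (rule arg_cong[where f="\<lambda>z. u/2*z"], rule Vx)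
  have "q = (-u/2 + P*(\<beta>-\<alpha>)) * V" using e1 qQ e2 by simp
  also have "\<dots> = - (u/2*V) + P*((\<beta>-\<alpha>)*V)" by (simp add: algebra_simps)
  also have "\<dots> = -u/2 + P*F" unfolding e3 F_def by (simp add: algebra_simps)
  finally have qF: "q = -u/2 + P*F" .
  have e4: "u*V = u*(1 + P*X*V)" by (rule arg_cong[where f="\<lambda>z. u*z"], rule Vx)
  have e5: "u*X*V = u*X*(1 + P*X*V)" by (rule arg_cong[where f="\<lambda>z. u*X*z"], rule Vx)
  have s1: "s = -sg*(u*X*V + 2*P*w)"
  proof -
    have "s = -sg/P * (u*V - u + 2*H)" unfolding s using Q0 P0 V by (simp add: field_simps)
    also have "u*V - u = P*(u*X*V)" unfolding e4 by (simp add: algebra_simps)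
    also have "2*H = P*(2*P*w)" using Hw by (simp add: power2_eq_square)
    finally have "s = -sg/P * (P*(u*X*V) + P*(2*P*w))" .
    also have "\<dots> = (-sg/P*P)*(u*X*V + 2*P*w)" by (simp only: distrib_left[symmetric] mult.assoc)
    also have "-sg/P*P = -sg" using P0 by simp
    finally show ?thesis .
  qed
  have s2: "u*X*V = u*X + P*(u*X^2*V)" unfolding e5 by (simp add: algebra_simps power2_eq_square)
  have "s - (-2*sg*q^2) = -sg*(u*X + P*(u*X^2*V) + 2*P*w) + 2*sg*(-u/2 + P*F)^2"
    unfolding s1 s2 qF by simp
  also have "\<dots> = P * (sg*(-(-u*\<alpha> + u*X^2*V + 2*w) - 2*u*F + 2*P*F^2))"
    unfolding X_def by (simp add: algebra_simps power2_eq_square)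
  finally show ?thesis unfolding F_def X_def .
qed

lemma seq_alg:
  fixes f u P sg Q s T K :: rat
  assumes f0: "f \<noteq> 0" and sg2: "sg * sg = 1" and K: "K = P * (sg * Q * f)"
    and sT: "s = - f * u / K - T"
  shows "s = - sg * u / (P * Q) - T"
proof -
  have sg0: "sg \<noteq> 0" using sg2 by auto
  have "f * u / K = (f * u) / (f * (sg * (P * Q)))" unfolding K by (simp only: ac_simps)
  also have "\<dots> = u / (sg * (P * Q))" using f0 by (rule mult_divide_mult_cancel_left)
  also have "u / (sg * (P * Q)) = sg * u / (P * Q)"
  proof -
    have "u = sg * (sg * u)" using sg2 by (simp only: mult.assoc[symmetric] mult_1)
    then have "u / (sg * (P * Q)) = sg * (sg * u) / (sg * (P * Q))" by (rule arg_cong[where f="\<lambda>z. z / (sg * (P * Q))"])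
    also have "\<dots> = sg * u / (P * Q)" using sg0 by (rule mult_divide_mult_cancel_left)
    finally show ?thesis .
  qed
  finally have "f * u / K = sg * u / (P * Q)" .
  then show ?thesis using sT by (simp only: minus_divide_left[symmetric] mult_minus_left)
qed


lemma fact_prod_lt: "(fact m :: rat) = (\<Prod>i<m. of_nat (Suc i))"
  unfolding fact_prod_Suc by (simp add: atLeast0LessThan)

lemma poch_prod_lt: "pochhammer (a::rat) m = (\<Prod>i<m. a + of_nat i)"
  unfolding pochhammer_prod by (simp add: atLeast0LessThan)

lemma Q_prod: "pochhammer (1/2 - of_nat m :: rat) m / fact m
   = (\<Prod>i<m. 1 - of_nat (2*m+1) * (1 / (2 * of_nat (Suc i))))"
proof -
  have "pochhammer (1/2 - of_nat m :: rat) m / fact m = (\<Prod>i<m. (1/2 - of_nat m + of_nat i) / of_nat (Suc i))"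
    unfolding poch_prod_lt fact_prod_lt by (simp add: prod_dividef)
  also have "\<dots> = (\<Prod>i<m. 1 - of_nat (2*m+1) * (1 / (2 * of_nat (Suc i))))"
  proof (rule prod.cong)
    fix i assume "i \<in> {..<m}"
    have "(of_nat (Suc i) :: rat) \<noteq> 0" by simp
    then show "(1/2 - of_nat m + of_nat i) / of_nat (Suc i) = 1 - of_nat (2*m+1) * (1 / (2 * of_nat (Suc i)) :: rat)"
      by (simp add: field_simps)
  qed simp
  finally show ?thesis .
qed

lemma R_prod: "pochhammer (- of_nat (2*m) :: rat) m / fact m
   = (\<Prod>i<m. 1 - of_nat (2*m+1) * (1 / of_nat (Suc i)))"
proof -
  have "pochhammer (- of_nat (2*m) :: rat) m / fact m = (\<Prod>i<m. (- of_nat (2*m) + of_nat i) / of_nat (Suc i))"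
    unfolding poch_prod_lt fact_prod_lt by (simp add: prod_dividef)
  also have "\<dots> = (\<Prod>i<m. 1 - of_nat (2*m+1) * (1 / of_nat (Suc i)))"
  proof (rule prod.cong)
    fix i assume "i \<in> {..<m}"
    have "(of_nat (Suc i) :: rat) \<noteq> 0" by simp
    then show "(- of_nat (2*m) + of_nat i) / of_nat (Suc i) = 1 - of_nat (2*m+1) * (1 / of_nat (Suc i) :: rat)"
      by (simp add: field_simps)
  qed simp
  finally show ?thesis .
qed

lemma Q_half: "pochhammer (1/2 - of_nat m :: rat) m = (-1)^m * pochhammer (1/2) m"
proof -
  have "pochhammer (- (of_nat m - 1/2) :: rat) m = (-1)^m * pochhammer (of_nat m - 1/2 - of_nat m + 1) m"
    by (rule pochhammer_minus)
  then show ?thesis by simp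
qed

lemma R_val: "pochhammer (- of_nat (2*m) :: rat) m = (-1)^m * 4^m * pochhammer (1/2) m"
proof -
  have a: "pochhammer (- of_nat (2*m) :: rat) m = (-1)^m * pochhammer (of_nat (2*m) - of_nat m + 1) m"
    by (rule pochhammer_minus)
  have b: "(of_nat (2*m) - of_nat m + 1 :: rat) = 1 + of_nat m" by simp
  have c: "(fact (m + m) :: rat) = fact m * pochhammer (1 + of_nat m) m"
    using pochhammer_product'[of "1::rat" m m] by (simp add: pochhammer_fact)
  have d: "(fact (2 * m) :: rat) = 2 ^ (2 * m) * pochhammer (1 / 2) m * fact m"
    by (rule fact_double)
  have d': "(fact (m + m) :: rat) = fact m * (2 ^ (2 * m) * pochhammer (1 / 2) m)"
    using d by (simp only: mult_2[symmetric] ac_simps)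
  have "(fact m :: rat) \<noteq> 0" by simp
  then have "pochhammer (1 + of_nat m :: rat) m = 2 ^ (2 * m) * pochhammer (1 / 2) m"
    using c d' by simp
  moreover have "(2::rat) ^ (2*m) = 4^m" by (simp add: power_mult)
  ultimately show ?thesis using a b by (simp add: add.commute)
qed

lemma poch32: "pochhammer (3/2 :: rat) m = of_nat (2*m+1) * pochhammer (1/2) m"
proof -
  have "pochhammer (1/2 :: rat) (Suc m) = 1/2 * pochhammer (1/2 + 1) m" by (rule pochhammer_rec)
  moreover have "pochhammer (1/2 :: rat) (Suc m) = pochhammer (1/2) m * (1/2 + of_nat m)" by (rule pochhammer_Suc)
  ultimately show ?thesis by (simp add: field_simps)
qed

lemma harm_lt: "harm m = (\<Sum>i<m. 1 / of_nat (Suc i))"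
  unfolding harm_def using sum.atLeast1_atMost_eq[of "\<lambda>j. 1 / (of_nat j :: rat)" m] by simp

lemma pint_harm: assumes "prime p" "m < p" shows "pint p (harm m)"
  unfolding harm_def using assms
  by (intro pint_sum[OF assms(1)] pint_inv_nat) (auto dest: dvd_imp_le)

theorem mainTheorem7:
  fixes p :: nat
  assumes "prime p" and "p > 3"
  shows "rat_cong
    (\<Sum>k\<in>{1..(p - 3) div 2}.
        (-1) ^ k * of_nat ((p - 1) div 2 choose k) * (2 * harm (2 * k) - harm k)
          / of_nat (2 * k + 1))
    (- 2 * (-1) ^ ((p - 1) div 2) * (fermat_quotient2 p) ^ 2) p"
proof -
  note p = assms(1) and p3 = assms(2)
  define m where "m = (p - 1) div 2"
  have oddp: "odd p" using prime_odd_nat[OF p] p3 by simp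
  have pm: "p = 2*m+1" unfolding m_def using oddp by presburger
  have m2: "m \<ge> 2" using p3 pm by simp
  have pm3: "(p - 3) div 2 = m - 1" using pm by simp
  define P where "P = (of_nat p :: rat)"
  have P0: "P \<noteq> 0" unfolding P_def using p3 by simp
  have Pm: "(of_nat (2*m+1) :: rat) = P" unfolding P_def pm ..
  define u where "u = harm m"
  have upint: "pint p u" unfolding u_def using pint_harm[OF p] pm by simp
  define H where "H = harm (p - 1)"
  define sg where "sg = ((-1::rat) ^ m)"
  have sg2: "sg * sg = 1" unfolding sg_def by (simp flip: power_add power2_eq_square add: power_mult[symmetric])
  define tm where "tm k = (-1) ^ k * of_nat (m choose k) * (2 * harm (2 * k) - harm k) / (of_nat (2 * k + 1) :: rat)" for k
  define s where "s = (\<Sum>k\<in>{1..m-1}. tm k)"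
  have full: "(\<Sum>k\<le>m. tm k) = - fact m * u / pochhammer (3/2::rat) m"
    unfolding tm_def u_def by (rule full_identity)
  have split: "(\<Sum>k\<le>m. tm k) = tm 0 + s + tm m"
  proof -
    have "{..m} = insert 0 (insert m {1..m-1})" using m2 by auto
    then have "(\<Sum>k\<le>m. tm k) = tm 0 + (tm m + s)" unfolding s_def using m2 by simp
    then show ?thesis by simp
  qed
  have tm0: "tm 0 = 0" unfolding tm_def by (simp add: harm_0)
  have tmm: "tm m = sg * (2*H - u) / P"
    unfolding tm_def sg_def H_def u_def using pm Pm by simp
  define Q where "Q = pochhammer (1/2 - of_nat m :: rat) m / fact m"
  have pochQ: "pochhammer (3/2::rat) m = P * (sg * Q * fact m)"
  proof -
    have "pochhammer (1/2::rat) m = sg * (sg * pochhammer (1/2) m)" using sg2 by (simp add: mult.assoc[symmetric])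
    also have "sg * pochhammer (1/2) m = Q * fact m" unfolding Q_def sg_def using Q_half[of m] by simp
    finally show ?thesis using poch32[of m] Pm by simp
  qed
  have s_eq: "s = -sg*u/(P*Q) - sg*(2*H - u)/P"
  proof -
    have Qf: "(fact m :: rat) \<noteq> 0" by simp
    have "tm 0 + s + tm m = - fact m * u / pochhammer (3/2::rat) m" using full split by (simp only:)
    then have "s = - fact m * u / pochhammer (3/2::rat) m - tm m" unfolding tm0 by (simp only: add_0 eq_diff_eq)
    from seq_alg[OF Qf sg2 pochQ this] show ?thesis unfolding tmm .
  qed
  have Qp: "Q = (\<Prod>i<m. 1 - of_nat p * (1 / (2 * of_nat (Suc i))))"
    unfolding Q_def Q_prod pm ..
  have hypa: "\<And>i. i \<in> {..<m} \<Longrightarrow> pint p (1 / (2 * of_nat (Suc i)))"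
  proof -
    fix i assume "i \<in> {..<m}"
    then have "\<not> p dvd (2 * Suc i)" using pm p by (auto dest: dvd_imp_le simp: prime_dvd_mult_iff)
    then have "pint p (1 / of_nat (2 * Suc i))" by (rule pint_inv_nat)
    then show "pint p (1 / (2 * of_nat (Suc i)))" by simp
  qed
  obtain \<alpha> where \<alpha>0: "pint p \<alpha>" "(\<Prod>i<m. 1 - of_nat p * (1 / (2 * of_nat (Suc i)))) = 1 - of_nat p * (\<Sum>i<m. 1 / (2 * of_nat (Suc i))) + of_nat p ^ 2 * \<alpha>"
    using prod_expand[where p=p and A="{..<m}" and x="\<lambda>i. 1 / (2 * of_nat (Suc i))", OF p hypa finite_lessThan] by blast
  note \<alpha> = \<alpha>0(1) \<alpha>0(2)[folded Qp]
  have sumx: "(\<Sum>i<m. 1 / (2 * of_nat (Suc i) :: rat)) = u / 2"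
    unfolding u_def harm_lt sum_divide_distrib by (rule sum.cong) auto
  have QX: "Q = 1 - P * (u/2 - P * \<alpha>)" using \<alpha>(2)[unfolded sumx] unfolding P_def by (simp add: algebra_simps power2_eq_square)
  define R where "R = pochhammer (- of_nat (2*m) :: rat) m / fact m"
  have Rp: "R = (\<Prod>i<m. 1 - of_nat p * (1 / of_nat (Suc i)))"
    unfolding R_def R_prod pm ..
  have hypb: "\<And>i. i \<in> {..<m} \<Longrightarrow> pint p (1 / of_nat (Suc i))"
    using pm by (intro pint_inv_nat) (auto dest: dvd_imp_le)
  obtain \<beta> where \<beta>0: "pint p \<beta>" "(\<Prod>i<m. 1 - of_nat p * (1 / of_nat (Suc i))) = 1 - of_nat p * (\<Sum>i<m. 1 / of_nat (Suc i)) + of_nat p ^ 2 * \<beta>"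
    using prod_expand[where p=p and A="{..<m}" and x="\<lambda>i. 1 / of_nat (Suc i)", OF p hypb finite_lessThan] by blast
  note \<beta> = \<beta>0(1) \<beta>0(2)[folded Rp]
  have RX: "R = 1 - P*u + P^2*\<beta>" using \<beta>(2) unfolding P_def u_def harm_lt by simp
  define q where "q = fermat_quotient2 p"
  have four: "(4::rat)^m = 1 + P*q"
  proof -
    have "(2::rat)^(p-1) = 4^m" using pm by (simp add: power_mult)
    then show ?thesis unfolding q_def fermat_quotient2_def P_def using P0[unfolded P_def] by simp
  qed
  have RQ: "R = (1 + P*q) * Q"
    unfolding R_def Q_def four[symmetric] R_val Q_half by simp

  have nd2: "\<not> p dvd 2" using p3 by (auto dest: dvd_imp_le)
  have h2: "pint p (1/2)" using pint_inv_nat[OF nd2] by simp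
  have u2: "pint p (u/2)" using pint_mult[OF p upint h2] by simp
  have Pp: "pint p P" unfolding P_def by (rule pint_of_nat[OF p])
  have Xpint: "pint p (u/2 - P*\<alpha>)" by (rule pint_diff[OF p u2 pint_mult[OF p Pp \<alpha>(1)]])
  define V where "V = 1 / (1 - P * (u/2 - P*\<alpha>))"
  have Vpint: "pint p V" unfolding V_def by (rule pint_inv_unit(1)[OF p Xpint, folded P_def])
  have VQ: "V * Q = 1" unfolding V_def QX using pint_inv_unit(2)[OF p Xpint, folded P_def] by simp
  obtain w where w: "pint p w" "H = of_nat p ^ 2 * w" using wolstenholme[OF p p3] unfolding H_def by blast
  have Hw: "H = P^2 * w" using w(2) unfolding P_def .
  have main: "s - (-2*sg*q^2) = P * (sg*(-(-u*\<alpha> + u*(u/2-P*\<alpha>)^2*V + 2*w)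
      - 2*u*((\<beta>-\<alpha>)*V - (u/2)*(u/2-P*\<alpha>)*V) + 2*P*((\<beta>-\<alpha>)*V - (u/2)*(u/2-P*\<alpha>)*V)^2))"
    by (rule alg[OF P0 QX VQ RX RQ Hw s_eq])
  define t where "t = sg*(-(-u*\<alpha> + u*(u/2-P*\<alpha>)^2*V + 2*w)
      - 2*u*((\<beta>-\<alpha>)*V - (u/2)*(u/2-P*\<alpha>)*V) + 2*P*((\<beta>-\<alpha>)*V - (u/2)*(u/2-P*\<alpha>)*V)^2)"
  have sgp: "pint p sg" unfolding sg_def using pint_power[OF p pint_of_int[OF p, of "-1"]] by simp
  have two: "pint p 2" using pint_of_nat[OF p, of 2] by simp
  have "pint p t" unfolding t_def
    by (intro pint_add[OF p] pint_diff[OF p] pint_mult[OF p] pint_power[OF p] pint_uminus[OF p]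
        upint \<alpha>(1) \<beta>(1) Vpint w(1) u2 sgp Pp two)
  then obtain a b :: int where ab: "b \<noteq> 0" "\<not> int p dvd b" "t = of_int a / of_int b"
    unfolding pint_def by blast
  have "s - (-2*sg*q^2) = of_nat p * (of_int a / of_int b)" using main ab(3) unfolding t_def P_def by simp
  then show ?thesis unfolding rat_cong_def s_def tm_def sg_def q_def m_def[symmetric] pm3
    using ab(1,2) by blast
qed

end
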